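(* Let $K$ be a semifield. Let $P$ be a polygon with vertex set $V$ and a non-empty dissection $D$, and let $d=\{\zeta,\eta\}\in D$ be such that $D = \{d\}\cup D_2$ where $D_2$ is a dissection of the subpolygon with vertex set $V_2 = \{\varepsilon \in V : \eta \le \varepsilon \le \zeta\}$. Let $U_1 = \{\varepsilon\in V : \zeta<\varepsilon<\eta\}$, $U_2 = \{\varepsilon\in V : \eta<\varepsilon<\zeta\}$, and let $\alpha \in U_1$, $\beta \in U_2$, and $f : \operatorname{diag}(P) \to K$ any map. (i) The rule $R(\alpha,\zeta,\pi_3,\dots,\pi_p) = (\eta,\zeta,\pi_3,\dots,\pi_p)$ defines a bijection from the set of $\pi\in\mathcal{T}_{P,D}(\alpha,\beta)$ with $\pi_2=\zeta$ and $\pi_3\neq\eta$ onto the set of $\rho\in\mathcal{T}_{P,D}(\eta,\beta)$ with $\rho_2=\zeta$, and it satisfies $\frac{f(\alpha,\zeta)}{f(\eta,\zeta)} f(R(\pi)) = f(\pi)$. (ii) The rule $S(\alpha,\zeta,\eta,\pi_4,\dots,\pi_p) = (\eta,\pi_4,\dots,\pi_p)$ defines a bijection from the set of $\pi\in\mathcal{T}_{P,D}(\alpha,\beta)$ with $\pi_2=\zeta$ and $\pi_3=\eta$ onto the set of $\sigma\in\mathcal{T}_{P,D}(\eta,\beta)$ with $\sigma_2\neq\zeta$, and it satisfies $\frac{f(\alpha,\zeta)}{f(\zeta,\eta)} f(S(\pi)) = f(\pi)$.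
   Context: A semifield is a set $K$ with binary operations $+,\cdot$ such that $+$ is associative and commutative, $(K,\cdot)$ is a commutative group, and $\cdot$ distributes over $+$; $x/y := xy^{-1}$. A polygon is a finite set $V$ of at least three vertices with a cyclic order, pictured as a convex polygon in the plane with vertices anticlockwise. "$a\le\varepsilon\le b$" means $\varepsilon$ lies on the cyclic interval from $a$ to $b$ in the positive direction, endpoints included; "$<$" excludes the corresponding endpoint. A subpolygon is a subset of at least three vertices with induced cyclic order. A diagonal is a two-element subset of $V$ (edges included); $\operatorname{diag}(P)$ is the set of diagonals; non-edges are internal. Diagonals cross if they consist of four distinct vertices $\alpha,\beta,\gamma,\delta$ appearing cyclically as $\alpha,\gamma,\beta,\delta$ or $\alpha,\delta,\beta,\gamma$. A dissection is a set of pairwise non-crossing internal diagonals. For vertices $\pi_1\neq\pi_p$, a $T$-path from $\pi_1$ to $\pi_p$ w.r.t. $D$ is a tuple $(\pi_1,\dots,\pi_p)$ of vertices with: (i) $\{\pi_1,\pi_2\},\dots,\{\pi_{p-1},\pi_p\}$ pairwise different diagonals; (ii) no $\{\pi_i,\pi_{i+1}\}$ crosses a diagonal of $D$; (iii) each $\{\pi_{2j},\pi_{2j+1}\}$ lies in $D$, and these cross the segment $\{\pi_1,\pi_p\}$ at pairwise different points progressing monotonically from $\pi_1$ to $\pi_p$. $\mathcal{T}_{P,D}(\alpha,\beta)$ is the set of such paths from $\alpha$ to $\beta$. With $f(\alpha,\beta):=f(\{\alpha,\beta\})$, $f(\pi) := \prod_{i\text{ odd}} f(\pi_i,\pi_{i+1})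 / \prod_{j\text{ even}} f(\pi_j,\pi_{j+1})$. *)

theory Defs
  imports Main
begin

class semifield_mult = comm_monoid_mult + ab_semigroup_add + inverse +
  assumes sf_left_inverse: "inverse a * a = 1"
  assumes sf_divide: "a / b = a * inverse b"
  assumes sf_distrib: "(a + b) * c = a * c + b * c"

text \<open>A polygon is a finite vertex set V (at least 3 vertices) whose cyclic order is given
by an enumeration pos : V -> {0..<card V} (anticlockwise = increasing pos, modulo card V).\<close>

definition polygon :: "'v set \<Rightarrow> ('v \<Rightarrow> nat) \<Rightarrow> bool" where
  "polygon V pos \<longleftrightarrow> finite V \<and> card V \<ge> 3 \<and> bij_betw pos V {..<card V}"

text \<open>btw V pos a x b: x lies strictly inside the cyclic interval from a to b in the positive
direction (a < x < b in the notation of the paper).\<close>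

definition btw :: "'v set \<Rightarrow> ('v \<Rightarrow> nat) \<Rightarrow> 'v \<Rightarrow> 'v \<Rightarrow> 'v \<Rightarrow> bool" where
  "btw V pos a x b \<longleftrightarrow>
     (let n = card V; k = (\<lambda>y. (pos y + n - pos a) mod n) in 0 < k x \<and> k x < k b)"

text \<open>a \<le> x \<le> b (closed cyclic interval, for a \<noteq> b).\<close>
definition cbtw :: "'v set \<Rightarrow> ('v \<Rightarrow> nat) \<Rightarrow> 'v \<Rightarrow> 'v \<Rightarrow> 'v \<Rightarrow> bool" where
  "cbtw V pos a x b \<longleftrightarrow> x = a \<or> x = b \<or> btw V pos a x b"

definition diag :: "'v set \<Rightarrow> 'v set set" where
  "diag W = {e. \<exists>a b. a \<in> W \<and> b \<in> W \<and> a \<noteq> b \<and> e = {a, b}}"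

text \<open>Edges of the (sub)polygon with vertex set W \<subseteq> V, with the cyclic order induced
from V: pairs of cyclically consecutive vertices of W.\<close>
definition is_edge :: "'v set \<Rightarrow> ('v \<Rightarrow> nat) \<Rightarrow> 'v set \<Rightarrow> 'v set \<Rightarrow> bool" where
  "is_edge V pos W e \<longleftrightarrow>
     (\<exists>a b. e = {a, b} \<and> a \<in> W \<and> b \<in> W \<and> a \<noteq> b \<and> (\<forall>w\<in>W. \<not> btw V pos a w b))"

definition crosses :: "'v set \<Rightarrow> ('v \<Rightarrow> nat) \<Rightarrow> 'v set \<Rightarrow> 'v set \<Rightarrow> bool" where
  "crosses V pos e1 e2 \<longleftrightarrow>
     (\<exists>a b c d. e1 = {a, b} \<and> e2 = {c, d} \<and> distinct [a, b, c, d] \<and>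
        btw V pos a c b \<and> btw V pos b d a)"

definition dissection :: "'v set \<Rightarrow> ('v \<Rightarrow> nat) \<Rightarrow> 'v set \<Rightarrow> 'v set set \<Rightarrow> bool" where
  "dissection V pos W D \<longleftrightarrow>
     D \<subseteq> diag W \<and> (\<forall>e\<in>D. \<not> is_edge V pos W e) \<and>
     (\<forall>e1\<in>D. \<forall>e2\<in>D. \<not> crosses V pos e1 e2)"

text \<open>Order of crossing points along the segment from x to y: for (non-crossing) diagonals
e, e' both crossing {x,y}, e crosses the segment strictly before e' (as seen from x) iff
e \<noteq> e' and e' lies entirely on the y-side of e.\<close>
definition cross_before :: "'v set \<Rightarrow> ('v \<Rightarrow> nat) \<Rightarrow> 'v \<Rightarrow> 'v \<Rightarrow> 'v set \<Rightarrow> 'v set \<Rightarrow> bool" where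
  "cross_before V pos x y e e' \<longleftrightarrow> e \<noteq> e' \<and>
     (\<exists>a b a' b'. e = {a, b} \<and> e' = {a', b'} \<and>
        btw V pos x a y \<and> btw V pos y b x \<and> btw V pos x a' y \<and> btw V pos y b' x \<and>
        (a' = a \<or> btw V pos a a' y) \<and> (b' = b \<or> btw V pos y b' b))"

text \<open>T-paths, as lists (0-indexed: the paper's \<pi>_i is xs ! (i-1); the paper's even steps
{\<pi>_2j, \<pi>_2j+1} are the steps with odd 0-based index).\<close>

definition step :: "'v list \<Rightarrow> nat \<Rightarrow> 'v set" where
  "step xs i = {xs ! i, xs ! Suc i}"

definition Tpath :: "'v set \<Rightarrow> ('v \<Rightarrow> nat) \<Rightarrow> 'v set set \<Rightarrow> 'v list \<Rightarrow> bool" where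
  "Tpath V pos D xs \<longleftrightarrow>
     length xs \<ge> 2 \<and> set xs \<subseteq> V \<and> hd xs \<noteq> last xs \<and>
     (\<forall>i < length xs - 1. step xs i \<in> diag V) \<and>
     inj_on (step xs) {..<length xs - 1} \<and>
     (\<forall>i < length xs - 1. \<forall>e\<in>D. \<not> crosses V pos (step xs i) e) \<and>
     (\<forall>i < length xs - 1. odd i \<longrightarrow>
        step xs i \<in> D \<and> crosses V pos (step xs i) {hd xs, last xs}) \<and>
     (\<forall>i j. odd i \<and> odd j \<and> i < j \<and> j < length xs - 1 \<longrightarrow>
        cross_before V pos (hd xs) (last xs) (step xs i) (step xs j))"

definition Tpaths :: "'v set \<Rightarrow> ('v \<Rightarrow> nat) \<Rightarrow> 'v set set \<Rightarrow> 'v \<Rightarrow> 'v \<Rightarrow> 'v list set" where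
  "Tpaths V pos D a b = {xs. Tpath V pos D xs \<and> hd xs = a \<and> last xs = b}"

text \<open>Weight f(\<pi>): product over the paper's odd steps divided by product over even steps.\<close>
definition Tweight :: "('v set \<Rightarrow> 'a::semifield_mult) \<Rightarrow> 'v list \<Rightarrow> 'a" where
  "Tweight f xs =
     (\<Prod>i \<in> {i. i < length xs - 1 \<and> even i}. f (step xs i)) /
     (\<Prod>i \<in> {i. i < length xs - 1 \<and> odd i}. f (step xs i))"

end

theory Submission
  imports Defs
begin

definition cyc :: "nat \<Rightarrow> nat \<Rightarrow> nat \<Rightarrow> bool" where
  "cyc p q s \<longleftrightarrow> (p < q \<and> q < s) \<or> (q < s \<and> s < p) \<or> (s < p \<and> p < q)"

lemma modrot: "(p::nat) < n \<Longrightarrow> q < n \<Longrightarrow> (p + n - q) mod n = (if q \<le> p then p - q else p + n - q)"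
proof (cases "q \<le> p")
  case True
  assume "p < n" "q < n"
  then have "p + n - q = (p - q) + n" using True by simp
  then have "(p + n - q) mod n = (p - q) mod n" by simp
  then show ?thesis using True \<open>p<n\<close> by simp
next
  case False
  assume "p < n" "q < n"
  then show ?thesis using False by simp
qed

lemma btw_cyc_arith:
  assumes "pa < n" "px < n" "pb < n"
  shows "(0 < (px + n - pa) mod n \<and> (px + n - pa) mod n < (pb + n - pa) mod n) \<longleftrightarrow> cyc pa px pb"
  using assms by (auto simp add: modrot cyc_def split: if_splits)

lemma cyc_rot:
  assumes "p < n" "q < n" "s < n" "c < n"
  shows "cyc ((p + n - c) mod n) ((q + n - c) mod n) ((s + n - c) mod n) \<longleftrightarrow> cyc p q s"
  using assms by (auto simp add: modrot cyc_def split: if_splits)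

lemma rot_inj:
  assumes "(p::nat) < n" "q < n" "c < n" "(p + n - c) mod n = (q + n - c) mod n"
  shows "p = q"
proof -
  have "(p + n - c) mod n = (if c \<le> p then p - c else p + n - c)"
       "(q + n - c) mod n = (if c \<le> q then q - c else q + n - c)"
    using assms modrot[of p n c] modrot[of q n c] by auto
  then show ?thesis using assms(1-3) assms(4) by (auto split: if_splits)
qed


lemma cyc_shift:
  assumes "A \<le> H" "X < A \<or> H < X" "Y < A \<or> H < Y"
  shows "cyc X A Y \<longleftrightarrow> cyc X H Y" "cyc A X Y \<longleftrightarrow> cyc H X Y" "cyc X Y A \<longleftrightarrow> cyc X Y H"
  using assms unfolding cyc_def by auto

lemma cyc_ord1: "p < s \<Longrightarrow> cyc p q s \<longleftrightarrow> p < q \<and> q < s"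
  unfolding cyc_def by auto
lemma cyc_ord2: "s < p \<Longrightarrow> cyc p q s \<longleftrightarrow> q < s \<or> p < q"
  unfolding cyc_def by auto

lemma crosses_iff:
  "crosses V pos {p, q} {c, d} \<longleftrightarrow> distinct [p, q, c, d] \<and>
     ((btw V pos p c q \<and> btw V pos q d p) \<or> (btw V pos p d q \<and> btw V pos q c p))"
  unfolding crosses_def doubleton_eq_iff by auto

lemma vert_in_odd:
  assumes "1 \<le> k" "k < length xs"
  shows "xs ! k = last xs \<or> (\<exists>i<length xs - 1. odd i \<and> xs ! k \<in> step xs i)"
proof (cases "k = length xs - 1")
  case True
  have ne: "xs \<noteq> []" using assms by auto
  show ?thesis using True by (simp add: last_conv_nth[OF ne])
next
  case False
  show ?thesis
  proof (cases "odd k")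
    case True
    then show ?thesis using False assms unfolding step_def by (intro disjI2 exI[of _ k]) auto
  next
    case ev: False
    then have "odd (k - 1)" "Suc (k - 1) = k" using assms by auto
    then show ?thesis using assms unfolding step_def by (intro disjI2 exI[of _ "k - 1"]) auto
  qed
qed

lemma nth_Cons_tl: "xs \<noteq> [] \<Longrightarrow> 0 < i \<Longrightarrow> (x # tl xs) ! i = xs ! i"
  by (cases xs) (auto simp: nth_Cons')

lemma step_Cons_tl: "xs \<noteq> [] \<Longrightarrow> 0 < i \<Longrightarrow> step (x # tl xs) i = step xs i"
  unfolding step_def using nth_Cons_tl[of xs i x] nth_Cons_tl[of xs "Suc i" x] by simp

lemma step_cons2: "step (a # b # ys) (Suc (Suc i)) = step ys i"
  by (simp add: step_def)

lemma step_drop2: "2 \<le> length xs \<Longrightarrow> step (drop 2 xs) i = step xs (i + 2)"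
  by (simp add: step_def nth_drop add.commute)

locale L =
  fixes V :: "'v set" and pos :: "'v \<Rightarrow> nat" and D D2 :: "'v set set"
    and z h al be :: 'v and V2 :: "'v set" and R :: "'v \<Rightarrow> nat"
  assumes P: "polygon V pos"
    and Dd: "dissection V pos V D"
    and dD: "{z, h} \<in> D"
    and DD: "D = insert {z, h} D2"
    and V2: "V2 = {e \<in> V. cbtw V pos h e z}"
    and D2: "D2 \<subseteq> diag V2"
    and alV: "al \<in> V" and al: "btw V pos z al h"
    and beV: "be \<in> V" and be: "btw V pos h be z"
    and R_def: "R = (\<lambda>y. (pos y + card V - pos z) mod card V)"
begin

lemma posV: "y \<in> V \<Longrightarrow> pos y < card V"
  using P unfolding polygon_def by (auto dest: bij_betw_apply)

lemma pos_inj: "x \<in> V \<Longrightarrow> y \<in> V \<Longrightarrow> pos x = pos y \<Longrightarrow> x = y"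
  using P unfolding polygon_def by (auto dest: bij_betw_imp_inj_on inj_onD)

lemma zhV: "z \<in> V" "h \<in> V" "z \<noteq> h"
proof -
  have "{z, h} \<in> diag V" using Dd dD unfolding dissection_def by auto
  then obtain x y where "x \<in> V" "y \<in> V" "x \<noteq> y" "{z, h} = {x, y}" unfolding diag_def by auto
  then show "z \<in> V" "h \<in> V" "z \<noteq> h" by (auto simp: doubleton_eq_iff)
qed

lemma R_lt: "y \<in> V \<Longrightarrow> R y < card V"
proof -
  assume "y \<in> V"
  then have "0 < card V" using posV by fastforce
  then show ?thesis unfolding R_def by simp
qed

lemma R_eq: "x \<in> V \<Longrightarrow> y \<in> V \<Longrightarrow> x = y \<longleftrightarrow> R x = R y"
  using rot_inj[of "pos x" "card V" "pos y" "pos z"] posV zhV pos_inj unfolding R_def by auto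

lemma Rz: "R z = 0"
  unfolding R_def by simp

lemma btwR: "a \<in> V \<Longrightarrow> x \<in> V \<Longrightarrow> b \<in> V \<Longrightarrow> btw V pos a x b \<longleftrightarrow> cyc (R a) (R x) (R b)"
  unfolding R_def btw_def Let_def
  using btw_cyc_arith[of "pos a" "card V" "pos x" "pos b"] cyc_rot[of "pos a" "card V" "pos x" "pos b" "pos z"]
    posV zhV by auto

lemma coords: "0 < R al" "R al < R h" "R h < R be" "R be < card V"
  using al be btwR[of z al h] btwR[of h be z] alV beV zhV Rz R_lt[OF beV] unfolding cyc_def by auto

lemma V2_iff: "x \<in> V2 \<longleftrightarrow> x \<in> V \<and> (R x = 0 \<or> R h \<le> R x)"
proof
  assume "x \<in> V2"
  then have x: "x \<in> V" "x = h \<or> x = z \<or> btw V pos h x z" using V2 unfolding cbtw_def by auto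
  then show "x \<in> V \<and> (R x = 0 \<or> R h \<le> R x)"
    using btwR[of h x z] zhV Rz unfolding cyc_def by auto
next
  assume x: "x \<in> V \<and> (R x = 0 \<or> R h \<le> R x)"
  then have "x = z \<or> x = h \<or> R h < R x" using R_eq[of x z] R_eq[of x h] zhV Rz by auto
  moreover have "R h < R x \<Longrightarrow> btw V pos h x z" using btwR[of h x z] zhV Rz x coords unfolding cyc_def by auto
  ultimately show "x \<in> V2" using V2 x unfolding cbtw_def by auto
qed

lemma D_sub: "e \<in> D \<Longrightarrow> \<exists>p q. e = {p, q} \<and> p \<noteq> q \<and> p \<in> V2 \<and> q \<in> V2"
proof -
  assume "e \<in> D"
  then have "e = {z, h} \<or> e \<in> diag V2" using DD D2 by auto
  moreover have "z \<in> V2" "h \<in> V2" using V2_iff zhV Rz by auto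
  ultimately show ?thesis using zhV unfolding diag_def by auto
qed

lemma alV2: "al \<notin> V2" using V2_iff coords by auto
lemma beV2: "be \<in> V2" using V2_iff coords beV by auto

lemma V2R: "x \<in> V2 \<Longrightarrow> x \<in> V \<and> (R x = 0 \<or> R h \<le> R x)"
  using V2_iff by auto

lemma D_mem: "e \<in> D \<Longrightarrow> x \<in> e \<Longrightarrow> x \<in> V2"
  using D_sub by blast

lemma NE:
  assumes e: "e \<in> D" and e': "e' \<in> D" and he: "h \<notin> e" and cb: "cross_before V pos al be e e'"
  shows "h \<notin> e'"
proof -
  obtain a b a' b' where ab: "e = {a, b}" "e' = {a', b'}" and
    c: "btw V pos al a be" "btw V pos be b al" "btw V pos al a' be" "btw V pos be b' al"
       "a' = a \<or> btw V pos a a' be" "b' = b \<or> btw V pos be b' b"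
    using cb unfolding cross_before_def by blast
  have V2s: "a \<in> V2" "b \<in> V2" "a' \<in> V2" "b' \<in> V2" using ab D_mem e e' by auto
  note r = V2R[OF V2s(1)] V2R[OF V2s(2)] V2R[OF V2s(3)] V2R[OF V2s(4)]
  have ah: "R a \<noteq> R h" using he ab R_eq[of a h] r zhV by auto
  note co = coords
  have "cyc (R al) (R a) (R be)" using c(1) r alV beV btwR by auto
  then have 1: "R al < R a" "R a < R be" using cyc_ord1 co by auto
  then have 2: "R h < R a" using r ah co by auto
  have "a' = a \<or> cyc (R a) (R a') (R be)" using c(5) r alV beV btwR by auto
  then have 3: "R h < R a'" using 1 2 cyc_ord1[of "R a" "R be" "R a'"] by auto
  have "cyc (R be) (R b') (R al)" using c(4) r alV beV btwR by auto
  then have 4: "R b' < R al \<or> R be < R b'" using cyc_ord2 co by auto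
  have "R a' \<noteq> R h \<and> R b' \<noteq> R h" using 3 4 co by auto
  then show ?thesis using ab r zhV by auto
qed

lemma cross_h: "crosses V pos e {h, be} \<Longrightarrow> h \<notin> e"
  unfolding crosses_def by auto

lemma V2_out: "x \<in> V2 \<Longrightarrow> x \<noteq> h \<Longrightarrow> R x < R al \<or> R h < R x"
proof -
  assume x: "x \<in> V2" "x \<noteq> h"
  then have "R x \<noteq> R h" using R_eq[of x h] zhV V2R by auto
  then show ?thesis using V2R[OF x(1)] coords by auto
qed

lemma btw_transfer:
  assumes "x \<in> V2" "x \<noteq> h"
  shows "btw V pos al x be \<longleftrightarrow> btw V pos h x be" "btw V pos be x al \<longleftrightarrow> btw V pos be x h"
proof -
  have o: "R x < R al \<or> R h < R x" "R be < R al \<or> R h < R be" using V2_out assms coords by auto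
  have v: "x \<in> V" using assms V2R by auto
  show "btw V pos al x be \<longleftrightarrow> btw V pos h x be" "btw V pos be x al \<longleftrightarrow> btw V pos be x h"
    using cyc_shift[of "R al" "R h", OF _ o(1) o(2)] cyc_shift[of "R al" "R h", OF _ o(2) o(1)]
      coords v zhV alV beV btwR by auto
qed

lemma btw_transfer3:
  assumes "x \<in> V2" "x \<noteq> h" "y \<in> V2" "y \<noteq> h"
  shows "btw V pos x al y \<longleftrightarrow> btw V pos x h y"
proof -
  have o: "R x < R al \<or> R h < R x" "R y < R al \<or> R h < R y" using V2_out assms by auto
  have v: "x \<in> V" "y \<in> V" using assms V2R by auto
  show ?thesis
    using cyc_shift[of "R al" "R h", OF _ o(1) o(2)] coords v zhV alV btwR by auto
qed

lemma cross_transfer: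
  assumes e: "e \<in> D" and he: "h \<notin> e"
  shows "crosses V pos e {al, be} \<longleftrightarrow> crosses V pos e {h, be}"
proof -
  obtain p q where pq: "e = {p, q}" "p \<noteq> q" "p \<in> V2" "q \<in> V2" using D_sub[OF e] by blast
  have ph: "p \<noteq> h" "q \<noteq> h" using he pq by auto
  have d: "p \<noteq> al" "q \<noteq> al" using pq alV2 by auto
  show ?thesis unfolding pq(1) crosses_iff
    using btw_transfer3[OF pq(3) ph(1) pq(4) ph(2)] btw_transfer3[OF pq(4) ph(2) pq(3) ph(1)] ph d
      zhV coords by auto
qed

lemma cb_transfer:
  assumes e: "e \<in> D" and e': "e' \<in> D" and he: "h \<notin> e" and he': "h \<notin> e'"
  shows "cross_before V pos al be e e' \<longleftrightarrow> cross_before V pos h be e e'"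
proof -
  have key: "(btw V pos al a be \<longleftrightarrow> btw V pos h a be) \<and> (btw V pos be b al \<longleftrightarrow> btw V pos be b h)
     \<and> (btw V pos al a' be \<longleftrightarrow> btw V pos h a' be) \<and> (btw V pos be b' al \<longleftrightarrow> btw V pos be b' h)"
    if "e = {a, b}" "e' = {a', b'}" for a b a' b'
  proof -
    have "a \<in> V2" "b \<in> V2" "a' \<in> V2" "b' \<in> V2" using that D_mem e e' by auto
    moreover have "a \<noteq> h" "b \<noteq> h" "a' \<noteq> h" "b' \<noteq> h" using that he he' by auto
    ultimately show ?thesis using btw_transfer by auto
  qed
  show ?thesis
  proof
    assume "cross_before V pos al be e e'"
    then obtain a b a' b' where w: "e \<noteq> e'" "e = {a, b}" "e' = {a', b'}"
      "btw V pos al a be" "btw V pos be b al" "btw V pos al a' be" "btw V pos be b' al"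
      "(a' = a \<or> btw V pos a a' be)" "(b' = b \<or> btw V pos be b' b)"
      unfolding cross_before_def by blast
    then show "cross_before V pos h be e e'" using key[OF w(2,3)] unfolding cross_before_def by blast
  next
    assume "cross_before V pos h be e e'"
    then obtain a b a' b' where w: "e \<noteq> e'" "e = {a, b}" "e' = {a', b'}"
      "btw V pos h a be" "btw V pos be b h" "btw V pos h a' be" "btw V pos be b' h"
      "(a' = a \<or> btw V pos a a' be)" "(b' = b \<or> btw V pos be b' b)"
      unfolding cross_before_def by blast
    then show "cross_before V pos al be e e'" using key[OF w(2,3)] unfolding cross_before_def by blast
  qed
qed

lemma cb_d_aux:
  assumes "p \<in> V2" "q \<in> V2" "R h < R q" "R q < R be" "R p = 0 \<or> R be < R p" "h \<notin> {p, q}"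
  shows "cross_before V pos al be {z, h} {q, p}"
proof -
  have v: "p \<in> V" "q \<in> V" using assms V2R by auto
  note co = coords
  have 1: "btw V pos al h be" using btwR[of al h be] alV beV zhV co cyc_ord1 by auto
  have 2: "btw V pos be z al" using btwR[of be z al] alV beV zhV co cyc_ord2 Rz by auto
  have 3: "btw V pos al q be" using btwR[of al q be] alV beV v co cyc_ord1 assms by auto
  have 4: "btw V pos be p al" using btwR[of be p al] alV beV v co cyc_ord2 assms by auto
  have 5: "btw V pos h q be" using btwR[of h q be] beV zhV v co cyc_ord1 assms by auto
  have 6: "p = z \<or> btw V pos be p z"
  proof (cases "R p = 0")
    case True then show ?thesis using R_eq[of p z] v zhV Rz by auto
  next
    case False then show ?thesis using btwR[of be p z] beV zhV v co cyc_ord2 Rz assms by auto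
  qed
  have 7: "{z, h} \<noteq> {q, p}" using assms(6) by auto
  show ?thesis unfolding cross_before_def using 1 2 3 4 5 6 7 by blast
qed

lemma cb_d:
  assumes e: "e \<in> D" and c: "crosses V pos e {h, be}"
  shows "cross_before V pos al be {z, h} e"
proof -
  obtain p q where pq: "e = {p, q}" "p \<noteq> q" "p \<in> V2" "q \<in> V2" using D_sub[OF e] by blast
  have hn: "h \<notin> {p, q}" using cross_h c pq by auto
  have v: "p \<in> V" "q \<in> V" using pq V2R by auto
  have rp: "R p = 0 \<or> R h < R p" "R q = 0 \<or> R h < R q"
    using V2_out[of p] V2_out[of q] pq hn V2R[of p] V2R[of q] coords by auto
  have cc: "(cyc (R p) (R h) (R q) \<and> cyc (R q) (R be) (R p)) \<or> (cyc (R p) (R be) (R q) \<and> cyc (R q) (R h) (R p))"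
    using c unfolding pq(1) crosses_iff using btwR v zhV beV by auto
  show ?thesis
  proof (cases "cyc (R p) (R h) (R q) \<and> cyc (R q) (R be) (R p)")
    case True
    then have "R h < R q \<and> R q < R be \<and> (R p = 0 \<or> R be < R p)" using rp coords unfolding cyc_def by auto
    then show ?thesis using cb_d_aux[of p q] pq hn by (auto simp: insert_commute)
  next
    case False
    then have "cyc (R p) (R be) (R q) \<and> cyc (R q) (R h) (R p)" using cc by auto
    then have "R h < R p \<and> R p < R be \<and> (R q = 0 \<or> R be < R q)" using rp coords unfolding cyc_def by auto
    then show ?thesis using cb_d_aux[of q p] pq hn by auto
  qed
qed

lemma no_cross_alz:
  assumes e: "e \<in> D" shows "\<not> crosses V pos {al, z} e"
proof -
  obtain p q where pq: "e = {p, q}" "p \<noteq> q" "p \<in> V2" "q \<in> V2" using D_sub[OF e] by blast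
  have v: "p \<in> V" "q \<in> V" using pq V2R by auto
  have rp: "R p = 0 \<or> R h \<le> R p" "R q = 0 \<or> R h \<le> R q" using pq V2R by auto
  have "\<not> btw V pos z x al" if "x \<in> V" "R x = 0 \<or> R h \<le> R x" for x
    using that btwR[of z x al] zhV alV Rz coords cyc_ord1[of 0 "R al" "R x"] by auto
  then show ?thesis unfolding pq(1) crosses_iff using v rp by auto
qed

lemma d_cross: "crosses V pos {z, h} {al, be}"
proof -
  have "distinct [z, h, al, be]" using zhV alV beV R_eq coords Rz by (auto simp: R_eq)
  then show ?thesis unfolding crosses_iff using al be by auto
qed

lemma TpathD:
  assumes "Tpath V pos D xs"
  shows "length xs \<ge> 2" "set xs \<subseteq> V" "hd xs \<noteq> last xs"
    "\<And>i. i < length xs - 1 \<Longrightarrow> step xs i \<in> diag V"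
    "inj_on (step xs) {..<length xs - 1}"
    "\<And>i e. i < length xs - 1 \<Longrightarrow> e \<in> D \<Longrightarrow> \<not> crosses V pos (step xs i) e"
    "\<And>i. i < length xs - 1 \<Longrightarrow> odd i \<Longrightarrow> step xs i \<in> D"
    "\<And>i. i < length xs - 1 \<Longrightarrow> odd i \<Longrightarrow> crosses V pos (step xs i) {hd xs, last xs}"
    "\<And>i j. odd i \<Longrightarrow> odd j \<Longrightarrow> i < j \<Longrightarrow> j < length xs - 1 \<Longrightarrow>
        cross_before V pos (hd xs) (last xs) (step xs i) (step xs j)"
  using assms unfolding Tpath_def by auto

lemma TpathI:
  assumes "length xs \<ge> 2" "set xs \<subseteq> V" "hd xs \<noteq> last xs"
    "\<And>i. i < length xs - 1 \<Longrightarrow> step xs i \<in> diag V"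
    "inj_on (step xs) {..<length xs - 1}"
    "\<And>i e. i < length xs - 1 \<Longrightarrow> e \<in> D \<Longrightarrow> \<not> crosses V pos (step xs i) e"
    "\<And>i. i < length xs - 1 \<Longrightarrow> odd i \<Longrightarrow> step xs i \<in> D"
    "\<And>i. i < length xs - 1 \<Longrightarrow> odd i \<Longrightarrow> crosses V pos (step xs i) {hd xs, last xs}"
    "\<And>i j. odd i \<Longrightarrow> odd j \<Longrightarrow> i < j \<Longrightarrow> j < length xs - 1 \<Longrightarrow>
        cross_before V pos (hd xs) (last xs) (step xs i) (step xs j)"
  shows "Tpath V pos D xs"
  using assms unfolding Tpath_def by auto

lemma Tpath_V2:
  assumes T: "Tpath V pos D xs" and l: "last xs = be" and k: "1 \<le> k" "k < length xs"
  shows "xs ! k \<in> V2"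
  using vert_in_odd[OF k] TpathD(7)[OF T] D_mem l beV2 by metis

lemma be_ne: "be \<noteq> h" "be \<noteq> z" "al \<noteq> h" "al \<noteq> z" "al \<noteq> be"
  using coords R_eq[of be h] R_eq[of be z] R_eq[of al h] R_eq[of al z] R_eq[of al be] beV alV zhV Rz by auto

lemma Tpath_noh:
  assumes T: "Tpath V pos D xs" and l: "last xs = be"
    and av: "\<And>i. i < length xs - 1 \<Longrightarrow> odd i \<Longrightarrow> h \<notin> step xs i"
    and k: "1 \<le> k" "k < length xs"
  shows "xs ! k \<noteq> h"
  using vert_in_odd[OF k] av l be_ne by metis

lemma odd_avoid:
  assumes T: "Tpath V pos D xs" and hd: "hd xs = al" and l: "last xs = be"
    and j0: "odd j0" "j0 < length xs - 1" "h \<notin> step xs j0"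
    and i: "odd i" "j0 \<le> i" "i < length xs - 1"
  shows "h \<notin> step xs i"
proof (cases "i = j0")
  case True then show ?thesis using j0 by simp
next
  case False
  then have "cross_before V pos al be (step xs j0) (step xs i)"
    using TpathD(9)[OF T, of j0 i] j0 i hd l by auto
  then show ?thesis using NE TpathD(7)[OF T] j0 i by blast
qed

lemma diag_hz: "{h, z} \<in> diag V" "{z, h} \<in> diag V" "{al, z} \<in> diag V"
  unfolding diag_def using zhV alV be_ne by auto

lemma D_nc: "e1 \<in> D \<Longrightarrow> e2 \<in> D \<Longrightarrow> \<not> crosses V pos e1 e2"
  using Dd unfolding dissection_def by auto

lemma fwd1:
  assumes T: "Tpath V pos D xs" and hd: "hd xs = al" and lst: "last xs = be"
    and len: "length xs \<ge> 3" and x1: "xs ! 1 = z" and x2: "xs ! 2 \<noteq> h"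
  shows "Tpath V pos D (h # tl xs)"
proof -
  define ys where "ys = h # tl xs"
  have ne: "xs \<noteq> []" using len by auto
  have lys: "length ys = length xs" using ne unfolding ys_def by auto
  have sy: "\<And>i. 0 < i \<Longrightarrow> step ys i = step xs i" unfolding ys_def by (rule step_Cons_tl[OF ne])
  have sy0: "step ys 0 = {h, z}" unfolding ys_def step_def using x1 ne by (cases xs) auto
  have hy: "hd ys = h" unfolding ys_def by simp
  have ly: "last ys = be" unfolding ys_def using len lst ne by (cases xs) auto
  have s1: "h \<notin> step xs 1" unfolding step_def using x1 x2 zhV by (auto simp: numeral_2_eq_2)
  have av: "\<And>i. i < length xs - 1 \<Longrightarrow> odd i \<Longrightarrow> h \<notin> step xs i"
  proof -
    fix i assume i: "i < length xs - 1" "odd i"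
    then have "1 \<le> i" by (cases i) auto
    then show "h \<notin> step xs i" using odd_avoid[OF T hd lst, of 1 i] s1 len i by auto
  qed
  have nh: "\<And>k. 1 \<le> k \<Longrightarrow> k < length xs \<Longrightarrow> xs ! k \<noteq> h"
    using Tpath_noh[OF T lst] av by blast
  have stepnh: "\<And>j. 0 < j \<Longrightarrow> j < length xs - 1 \<Longrightarrow> h \<notin> step xs j"
  proof -
    fix j assume j: "0 < j" "j < length xs - 1"
    then have "xs ! j \<noteq> h" "xs ! Suc j \<noteq> h" using nh[of j] nh[of "Suc j"] by auto
    then show "h \<notin> step xs j" unfolding step_def by auto
  qed
  have "Tpath V pos D ys"
  proof (rule TpathI)
    show "length ys \<ge> 2" using lys len by simp
    show "set ys \<subseteq> V" unfolding ys_def using TpathD(2)[OF T] zhV ne by (cases xs) auto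
    show "hd ys \<noteq> last ys" using hy ly be_ne by simp
    show "step ys i \<in> diag V" if "i < length ys - 1" for i
      using that sy sy0 diag_hz TpathD(4)[OF T] lys by (cases "i = 0") auto
    show "inj_on (step ys) {..<length ys - 1}"
    proof (rule inj_onI)
      fix i j assume ij: "i \<in> {..<length ys - 1}" "j \<in> {..<length ys - 1}" "step ys i = step ys j"
      show "i = j"
      proof (cases "i = 0 \<or> j = 0")
        case True
        then show ?thesis using ij sy sy0 stepnh lys by (metis insertI1 lessThan_iff neq0_conv)
      next
        case False
        then show ?thesis using ij sy lys TpathD(5)[OF T] by (auto dest: inj_onD)
      qed
    qed
    show "\<not> crosses V pos (step ys i) e" if "i < length ys - 1" "e \<in> D" for i e
      using that sy sy0 TpathD(6)[OF T] D_nc dD lys by (cases "i = 0") (auto simp: insert_commute)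
    show "step ys i \<in> D" if "i < length ys - 1" "odd i" for i
      using that sy TpathD(7)[OF T] lys by (cases "i = 0") auto
    show "crosses V pos (step ys i) {hd ys, last ys}" if "i < length ys - 1" "odd i" for i
    proof -
      have "0 < i" using that by (cases i) auto
      then show ?thesis using that sy TpathD(7,8)[OF T] lys hd lst hy ly cross_transfer av by auto
    qed
    show "cross_before V pos (hd ys) (last ys) (step ys i) (step ys j)"
      if "odd i" "odd j" "i < j" "j < length ys - 1" for i j
    proof -
      have "0 < i" "0 < j" using that by (cases i; auto)+
      then show ?thesis using that sy TpathD(7,9)[OF T] lys hd lst hy ly cb_transfer av by auto
    qed
  qed
  then show ?thesis unfolding ys_def .
qed

lemma bwd1:
  assumes T: "Tpath V pos D ys" and hy: "hd ys = h" and ly: "last ys = be" and y1: "ys ! 1 = z"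
  shows "Tpath V pos D (al # tl ys)" "length ys \<ge> 3" "ys ! 2 \<noteq> h"
proof -
  have l2: "length ys \<ge> 2" using TpathD(1)[OF T] .
  have ne: "ys \<noteq> []" using l2 by auto
  have "length ys \<noteq> 2"
  proof
    assume "length ys = 2"
    then have "last ys = ys ! 1" using last_conv_nth[OF ne] by simp
    then show False using ly y1 be_ne by simp
  qed
  then show len: "length ys \<ge> 3" using l2 by simp
  have y0: "ys ! 0 = h" using hy ne by (simp add: hd_conv_nth)
  have s0: "step ys 0 = {h, z}" unfolding step_def using y0 y1 by simp
  show y2: "ys ! 2 \<noteq> h"
  proof
    assume "ys ! 2 = h"
    then have "step ys 1 = step ys 0" unfolding step_def using y0 y1 by (auto simp: numeral_2_eq_2)
    moreover have "0 < length ys - 1" "1 < length ys - 1" using len by auto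
    ultimately show False using TpathD(5)[OF T] by (auto dest: inj_onD)
  qed
  define xs where "xs = al # tl ys"
  have lxs: "length xs = length ys" using ne unfolding xs_def by auto
  have sx: "\<And>i. 0 < i \<Longrightarrow> step xs i = step ys i" unfolding xs_def by (rule step_Cons_tl[OF ne])
  have sx0: "step xs 0 = {al, z}" unfolding xs_def step_def using y1 ne by (cases ys) auto
  have hx: "hd xs = al" unfolding xs_def by simp
  have lx: "last xs = be" unfolding xs_def using len ly ne by (cases ys) auto
  have av: "\<And>i. i < length ys - 1 \<Longrightarrow> odd i \<Longrightarrow> h \<notin> step ys i"
    using TpathD(8)[OF T] hy ly cross_h by metis
  have noal: "al \<notin> step ys j" if "0 < j" "j < length ys - 1" for j
  proof -
    have "ys ! j \<in> V2" "ys ! Suc j \<in> V2" using Tpath_V2[OF T ly, of j] Tpath_V2[OF T ly, of "Suc j"] that by auto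
    then show ?thesis unfolding step_def using alV2 by auto
  qed
  have "Tpath V pos D xs"
  proof (rule TpathI)
    show "length xs \<ge> 2" using lxs len by simp
    show "set xs \<subseteq> V" unfolding xs_def using TpathD(2)[OF T] alV ne by (cases ys) auto
    show "hd xs \<noteq> last xs" using hx lx be_ne by simp
    show "step xs i \<in> diag V" if "i < length xs - 1" for i
      using that sx sx0 diag_hz TpathD(4)[OF T] lxs by (cases "i = 0") auto
    show "inj_on (step xs) {..<length xs - 1}"
    proof (rule inj_onI)
      fix i j assume ij: "i \<in> {..<length xs - 1}" "j \<in> {..<length xs - 1}" "step xs i = step xs j"
      show "i = j"
      proof (cases "i = 0 \<or> j = 0")
        case True
        then show ?thesis using ij sx sx0 noal lxs by (metis insertI1 lessThan_iff neq0_conv)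
      next
        case False
        then show ?thesis using ij sx lxs TpathD(5)[OF T] by (auto dest: inj_onD)
      qed
    qed
    show "\<not> crosses V pos (step xs i) e" if "i < length xs - 1" "e \<in> D" for i e
      using that sx sx0 TpathD(6)[OF T] no_cross_alz lxs by (cases "i = 0") auto
    show "step xs i \<in> D" if "i < length xs - 1" "odd i" for i
      using that sx TpathD(7)[OF T] lxs by (cases "i = 0") auto
    show "crosses V pos (step xs i) {hd xs, last xs}" if "i < length xs - 1" "odd i" for i
    proof -
      have "0 < i" using that by (cases i) auto
      then show ?thesis using that sx TpathD(7,8)[OF T] lxs hy ly hx lx cross_transfer av by auto
    qed
    show "cross_before V pos (hd xs) (last xs) (step xs i) (step xs j)"
      if "odd i" "odd j" "i < j" "j < length xs - 1" for i j
    proof -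
      have "0 < i" "0 < j" using that by (cases i; auto)+
      then show ?thesis using that sx TpathD(7,9)[OF T] lxs hy ly hx lx cb_transfer av by auto
    qed
  qed
  then show "Tpath V pos D (al # tl ys)" unfolding xs_def .
qed

lemma fwd2:
  assumes T: "Tpath V pos D xs" and hd: "hd xs = al" and lst: "last xs = be"
    and len: "length xs \<ge> 3" and x1: "xs ! 1 = z" and x2: "xs ! 2 = h"
  shows "Tpath V pos D (drop 2 xs)" "drop 2 xs ! 1 \<noteq> z" "length xs \<ge> 4"
proof -
  have ne: "xs \<noteq> []" using len by auto
  have "length xs \<noteq> 3"
  proof
    assume "length xs = 3"
    then have "last xs = xs ! 2" using last_conv_nth[OF ne] by simp
    then show False using lst x2 be_ne by simp
  qed
  then show len4: "length xs \<ge> 4" using len by simp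
  define ys where "ys = drop 2 xs"
  have lys: "length ys = length xs - 2" unfolding ys_def by simp
  have sy: "\<And>i. step ys i = step xs (i + 2)" unfolding ys_def proof -
    fix i have "2 \<le> length xs" using len by simp
    then show "step (drop 2 xs) i = step xs (i + 2)" by (rule step_drop2)
  qed
  have hy: "hd ys = h" unfolding ys_def using x2 len by (simp add: hd_drop_conv_nth)
  have ly: "last ys = be" unfolding ys_def using lst len by (simp add: last_drop)
  have s1: "step xs 1 = {z, h}" unfolding step_def using x1 x2 by (simp add: numeral_2_eq_2)
  have s2: "step xs 2 = {h, xs ! 3}" unfolding step_def using x2 by (simp add: numeral_3_eq_3)
  have inj: "inj_on (step xs) {..<length xs - 1}" using TpathD(5)[OF T] .
  have x3h: "xs ! 3 \<noteq> h"
  proof -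
    have "step xs 2 \<in> diag V" using TpathD(4)[OF T, of 2] len4 by simp
    then show ?thesis unfolding s2 diag_def by (auto simp: doubleton_eq_iff)
  qed
  have x3z: "xs ! 3 \<noteq> z"
  proof
    assume "xs ! 3 = z"
    then have "step xs 2 = step xs 1" using s1 s2 by auto
    then show False using inj len4 by (auto dest: inj_onD)
  qed
  then show "drop 2 xs ! 1 \<noteq> z" using len4 by simp
  have s3: "h \<notin> step xs 3" if "3 < length xs - 1"
  proof
    assume h3: "h \<in> step xs 3"
    have "Suc 3 = (4::nat)" by simp
    then have "step xs 3 = {xs ! 3, xs ! 4}" unfolding step_def by metis
    then have "xs ! 4 = h" using h3 x3h by auto
    then have "step xs 3 = step xs 2" using s2 \<open>step xs 3 = _\<close> by auto
    then show False using inj that by (auto dest: inj_onD)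
  qed
  have av: "h \<notin> step xs i" if "odd i" "3 \<le> i" "i < length xs - 1" for i
    using odd_avoid[OF T hd lst, of 3 i] s3 that by auto
  have "Tpath V pos D ys"
  proof (rule TpathI)
    show "length ys \<ge> 2" using lys len4 by simp
    show "set ys \<subseteq> V" unfolding ys_def by (rule subset_trans[OF set_drop_subset TpathD(2)[OF T]])
    show "hd ys \<noteq> last ys" using hy ly be_ne by simp
    show "step ys i \<in> diag V" if "i < length ys - 1" for i
    proof -
      have "i + 2 < length xs - 1" using that lys by simp
      then show ?thesis unfolding sy by (rule TpathD(4)[OF T])
    qed
    show "inj_on (step ys) {..<length ys - 1}"
    proof (rule inj_onI)
      fix i j assume ij: "i \<in> {..<length ys - 1}" "j \<in> {..<length ys - 1}" "step ys i = step ys j"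
      then have "step xs (i + 2) = step xs (j + 2)" using sy by simp
      moreover have "i + 2 \<in> {..<length xs - 1}" "j + 2 \<in> {..<length xs - 1}" using ij lys by auto
      ultimately have "i + 2 = j + 2" using inj by (auto dest: inj_onD)
      then show "i = j" by simp
    qed
    show "\<not> crosses V pos (step ys i) e" if "i < length ys - 1" "e \<in> D" for i e
    proof -
      have "i + 2 < length xs - 1" using that lys by simp
      then show ?thesis unfolding sy using TpathD(6)[OF T] that(2) by blast
    qed
    show "step ys i \<in> D" if "i < length ys - 1" "odd i" for i
    proof -
      have "i + 2 < length xs - 1" "odd (i + 2)" using that lys by auto
      then show ?thesis unfolding sy by (rule TpathD(7)[OF T])
    qed
    show "crosses V pos (step ys i) {hd ys, last ys}" if "i < length ys - 1" "odd i" for i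
    proof -
      have ii: "i + 2 < length xs - 1" "odd (i + 2)" using that lys by auto
      have "1 \<le> i" using that by (cases i) auto
      then have "h \<notin> step xs (i + 2)" using av[of "i + 2"] ii by simp
      moreover have "step xs (i + 2) \<in> D" using TpathD(7)[OF T] ii by blast
      moreover have "crosses V pos (step xs (i + 2)) {al, be}" using TpathD(8)[OF T] ii hd lst by metis
      ultimately show ?thesis unfolding sy hy ly using cross_transfer by blast
    qed
    show "cross_before V pos (hd ys) (last ys) (step ys i) (step ys j)"
      if "odd i" "odd j" "i < j" "j < length ys - 1" for i j
    proof -
      have ii: "i + 2 < length xs - 1" "odd (i + 2)" "j + 2 < length xs - 1" "odd (j + 2)" "i + 2 < j + 2"
        using that lys by auto
      have "1 \<le> i" "1 \<le> j" using that by (cases i, auto)+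
      then have "h \<notin> step xs (i + 2)" "h \<notin> step xs (j + 2)" using av[of "i + 2"] av[of "j + 2"] ii
        by simp_all
      moreover have "step xs (i + 2) \<in> D" "step xs (j + 2) \<in> D" using TpathD(7)[OF T] ii by blast+
      moreover have "cross_before V pos al be (step xs (i + 2)) (step xs (j + 2))"
        using TpathD(9)[OF T, of "i + 2" "j + 2"] ii hd lst by simp
      ultimately show ?thesis unfolding sy hy ly using cb_transfer by blast
    qed
  qed
  then show "Tpath V pos D (drop 2 xs)" unfolding ys_def .
qed

lemma bwd2:
  assumes T: "Tpath V pos D ys" and hy: "hd ys = h" and ly: "last ys = be" and y1: "ys ! 1 \<noteq> z"
  shows "Tpath V pos D (al # z # ys)"
proof -
  have l2: "length ys \<ge> 2" using TpathD(1)[OF T] .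
  have ne: "ys \<noteq> []" using l2 by auto
  have y0: "ys ! 0 = h" using hy ne by (simp add: hd_conv_nth)
  define xs where "xs = al # z # ys"
  have lxs: "length xs = length ys + 2" unfolding xs_def by simp
  have s0: "step xs 0 = {al, z}" unfolding xs_def step_def by simp
  have s1: "step xs 1 = {z, h}" unfolding xs_def step_def using y0 by simp
  have sx: "step xs i = step ys (i - 2)" if "2 \<le> i" for i
  proof -
    have "i = Suc (Suc (i - 2))" using that by simp
    then show ?thesis unfolding xs_def using step_cons2 by metis
  qed
  have hx: "hd xs = al" unfolding xs_def by simp
  have lx: "last xs = be" unfolding xs_def using ly ne by simp
  have cr: "\<And>i. i < length ys - 1 \<Longrightarrow> odd i \<Longrightarrow> crosses V pos (step ys i) {h, be}"
    using TpathD(8)[OF T] hy ly by metis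
  have av: "\<And>i. i < length ys - 1 \<Longrightarrow> odd i \<Longrightarrow> h \<notin> step ys i"
    using cr cross_h by metis
  have nh: "\<And>k. 1 \<le> k \<Longrightarrow> k < length ys \<Longrightarrow> ys ! k \<noteq> h"
    using Tpath_noh[OF T ly] av by blast
  have hV2: "h \<in> V2" using V2_iff zhV by auto
  have V2all: "ys ! k \<in> V2" if "k < length ys" for k
  proof (cases "k = 0")
    case True then show ?thesis using y0 hV2 by simp
  next
    case False then show ?thesis using Tpath_V2[OF T ly, of k] that by simp
  qed
  have noal: "al \<notin> step ys j" if "j < length ys - 1" for j
  proof -
    have "ys ! j \<in> V2" "ys ! Suc j \<in> V2" using V2all that by auto
    then show ?thesis unfolding step_def using alV2 by auto
  qed
  have nd: "step ys j \<noteq> {z, h}" if "j < length ys - 1" for j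
  proof (cases "j = 0")
    case True
    have "ys ! 1 \<noteq> h" using nh[of 1] l2 by simp
    then have "z \<notin> step ys 0" unfolding step_def using y0 y1 zhV by auto
    then show ?thesis using True by auto
  next
    case False
    then have "ys ! j \<noteq> h" "ys ! Suc j \<noteq> h" using nh[of j] nh[of "Suc j"] that by auto
    then have "h \<notin> step ys j" unfolding step_def by auto
    then show ?thesis by auto
  qed
  have n01: "{al, z} \<noteq> {z, h}" using be_ne by (auto simp: doubleton_eq_iff)
  have A: "step xs i \<noteq> {al, z} \<and> step xs i \<noteq> {z, h}" if "2 \<le> i" "i < length xs - 1" for i
  proof -
    have "i - 2 < length ys - 1" using that lxs by simp
    then show ?thesis using sx[OF that(1)] noal nd by auto
  qed
  have "Tpath V pos D xs"
  proof (rule TpathI)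
    show "length xs \<ge> 2" using lxs by simp
    show "set xs \<subseteq> V" unfolding xs_def using TpathD(2)[OF T] alV zhV by simp
    show "hd xs \<noteq> last xs" using hx lx be_ne by simp
    show "step xs i \<in> diag V" if "i < length xs - 1" for i
    proof -
      consider "i = 0" | "i = 1" | "2 \<le> i" by linarith
      then show ?thesis
      proof cases
        case 3
        then have "i - 2 < length ys - 1" using that lxs by simp
        then show ?thesis using sx[OF 3] TpathD(4)[OF T] by simp
      qed (use s0 s1 diag_hz in auto)
    qed
    show "inj_on (step xs) {..<length xs - 1}"
    proof (rule inj_onI)
      fix i j assume ij: "i \<in> {..<length xs - 1}" "j \<in> {..<length xs - 1}" "step xs i = step xs j"
      show "i = j"
      proof (cases "2 \<le> i \<and> 2 \<le> j")
        case True
        then have "step ys (i - 2) = step ys (j - 2)" using ij sx by simp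
        moreover have "i - 2 \<in> {..<length ys - 1}" "j - 2 \<in> {..<length ys - 1}" using ij lxs True by auto
        ultimately have "i - 2 = j - 2" using TpathD(5)[OF T] by (auto dest: inj_onD)
        then show ?thesis using True by linarith
      next
        case False
        then consider "i < 2" "j < 2" | "i < 2" "2 \<le> j" | "2 \<le> i" "j < 2" by linarith
        then show ?thesis
        proof cases
          case 1
          then have "i = 0 \<or> i = 1" "j = 0 \<or> j = 1" by auto
          then show ?thesis using ij(3) s0 s1 n01 by auto
        next
          case 2
          then have "i = 0 \<or> i = 1" by auto
          then show ?thesis using ij s0 s1 A[of j] 2 by auto
        next
          case 3
          then have "j = 0 \<or> j = 1" by auto
          then show ?thesis using ij s0 s1 A[of i] 3 by auto
        qed
      qed
    qed
    show "\<not> crosses V pos (step xs i) e" if "i < length xs - 1" "e \<in> D" for i e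
    proof -
      consider "i = 0" | "i = 1" | "2 \<le> i" by linarith
      then show ?thesis
      proof cases
        case 1 then show ?thesis using s0 no_cross_alz that(2) by simp
      next
        case 2 then show ?thesis using s1 D_nc dD that(2) by (simp add: insert_commute)
      next
        case 3
        then have "i - 2 < length ys - 1" using that lxs by simp
        then show ?thesis using sx[OF 3] TpathD(6)[OF T] that(2) by simp
      qed
    qed
    show "step xs i \<in> D" if "i < length xs - 1" "odd i" for i
    proof -
      have "i = 1 \<or> 2 \<le> i" using that by (cases i) auto
      then consider "i = 1" | "2 \<le> i" by blast
      then show ?thesis
      proof cases
        case 1 then show ?thesis using s1 dD by (simp add: insert_commute)
      next
        case 2
        then have "i - 2 < length ys - 1" "odd (i - 2)" using that lxs by auto
        then show ?thesis using sx[OF 2] TpathD(7)[OF T] by simp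
      qed
    qed
    show "crosses V pos (step xs i) {hd xs, last xs}" if "i < length xs - 1" "odd i" for i
    proof -
      have "i = 1 \<or> 2 \<le> i" using that by (cases i) auto
      then consider "i = 1" | "2 \<le> i" by blast
      then show ?thesis
      proof cases
        case 1 then show ?thesis using s1 d_cross hx lx by (simp add: insert_commute)
      next
        case 2
        then have ii: "i - 2 < length ys - 1" "odd (i - 2)" using that lxs by auto
        then have "step ys (i - 2) \<in> D" "crosses V pos (step ys (i - 2)) {h, be}"
          using TpathD(7)[OF T] cr by auto
        then show ?thesis using sx[OF 2] hx lx cross_transfer cross_h by metis
      qed
    qed
    show "cross_before V pos (hd xs) (last xs) (step xs i) (step xs j)"
      if "odd i" "odd j" "i < j" "j < length xs - 1" for i j
    proof -
      have "i \<noteq> 0" using that(1) by (cases i) auto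
      then have j2: "2 \<le> j" using that(3) by linarith
      then have jj: "j - 2 < length ys - 1" "odd (j - 2)" using that lxs by auto
      then have jD: "step ys (j - 2) \<in> D" "crosses V pos (step ys (j - 2)) {h, be}"
        using TpathD(7)[OF T] cr by auto
      have "i = 1 \<or> 2 \<le> i" using that by (cases i) auto
      then consider "i = 1" | "2 \<le> i" by blast
      then show ?thesis
      proof cases
        case 1
        then show ?thesis using s1 sx[OF j2] hx lx cb_d[OF jD] by (simp add: insert_commute)
      next
        case 2
        then have ii: "i - 2 < length ys - 1" "odd (i - 2)" "i - 2 < j - 2" using that lxs by auto
        then have iD: "step ys (i - 2) \<in> D" "crosses V pos (step ys (i - 2)) {h, be}"
          using TpathD(7)[OF T] cr by auto
        have "cross_before V pos h be (step ys (i - 2)) (step ys (j - 2))"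
          using TpathD(9)[OF T, of "i - 2" "j - 2"] ii jj hy ly by simp
        then show ?thesis using sx[OF 2] sx[OF j2] hx lx cb_transfer[OF iD(1) jD(1)] cross_h iD jD by metis
      qed
    qed
  qed
  then show ?thesis unfolding xs_def .
qed

end

lemma sf_right_inverse: "(a::'a::semifield_mult) * inverse a = 1"
  using sf_left_inverse[of a] by (simp add: mult.commute)

lemma sf_inv_mult: "inverse (a * b) = inverse a * inverse (b::'a::semifield_mult)"
proof -
  have "(a * b) * (inverse a * inverse b) = (inverse a * a) * (inverse b * b)"
    by (simp add: ac_simps)
  also have "\<dots> = 1" by (simp add: sf_left_inverse)
  finally have 1: "(a * b) * (inverse a * inverse b) = 1" .
  have "inverse (a * b) = inverse (a * b) * ((a * b) * (inverse a * inverse b))" using 1 by simp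
  also have "\<dots> = (inverse (a * b) * (a * b)) * (inverse a * inverse b)" by (simp add: ac_simps)
  also have "\<dots> = inverse a * inverse b" by (simp add: sf_left_inverse)
  finally show ?thesis .
qed

lemma sf_solve: "c * x = a * (y::'a::semifield_mult) \<Longrightarrow> a / c * y = x"
proof -
  assume h: "c * x = a * y"
  have "a / c * y = inverse c * (a * y)" by (simp add: sf_divide ac_simps)
  also have "\<dots> = inverse c * (c * x)" using h by simp
  also have "\<dots> = x" by (simp add: mult.assoc[symmetric] sf_left_inverse)
  finally show ?thesis .
qed

lemma W1:
  fixes f :: "'v set \<Rightarrow> 'a::semifield_mult"
  assumes len: "length xs = length ys" "length xs \<ge> 2"
    and st: "\<And>i. 0 < i \<Longrightarrow> step xs i = step ys i"
  shows "f (step ys 0) * Tweight f xs = f (step xs 0) * Tweight f ys"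
proof -
  define E' where "E' = {i. i < length xs - 1 \<and> even i \<and> 0 < i}"
  define Od where "Od = {i. i < length xs - 1 \<and> odd i}"
  have fin: "finite E'" unfolding E'_def by simp
  have Ex: "{i. i < length xs - 1 \<and> even i} = insert 0 E'" using len unfolding E'_def by auto
  have Ey: "{i. i < length ys - 1 \<and> even i} = insert 0 E'" using len unfolding E'_def by auto
  have Oy: "{i. i < length ys - 1 \<and> odd i} = Od" using len unfolding Od_def by simp
  have pE: "(\<Prod>i\<in>E'. f (step xs i)) = (\<Prod>i\<in>E'. f (step ys i))"
    by (rule prod.cong) (auto simp: E'_def st)
  have pO: "(\<Prod>i\<in>Od. f (step xs i)) = (\<Prod>i\<in>Od. f (step ys i))"
  proof (rule prod.cong)
    fix i assume "i \<in> Od" then have "0 < i" unfolding Od_def by (cases i) auto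
    then show "f (step xs i) = f (step ys i)" using st by simp
  qed simp
  have "Tweight f xs = f (step xs 0) * (\<Prod>i\<in>E'. f (step ys i)) / (\<Prod>i\<in>Od. f (step ys i))"
    unfolding Tweight_def Ex Od_def[symmetric] using fin pE pO unfolding E'_def by simp
  moreover have "Tweight f ys = f (step ys 0) * (\<Prod>i\<in>E'. f (step ys i)) / (\<Prod>i\<in>Od. f (step ys i))"
    unfolding Tweight_def Ey Oy using fin unfolding E'_def by simp
  ultimately show ?thesis by (simp add: sf_divide ac_simps)
qed

lemma prod_shift:
  assumes "finite E" "k \<notin> (\<lambda>i::nat. i + 2) ` E"
  shows "(\<Prod>i\<in>insert k ((\<lambda>i. i + 2) ` E). g i) = g k * (\<Prod>i\<in>E. g (i + 2))"
proof -
  have inj: "inj_on (\<lambda>i::nat. i + 2) E" by (simp add: inj_on_def)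
  have "(\<Prod>i\<in>insert k ((\<lambda>i. i + 2) ` E). g i) = g k * (\<Prod>i\<in>(\<lambda>i. i + 2) ` E. g i)"
    using assms by simp
  also have "(\<Prod>i\<in>(\<lambda>i. i + 2) ` E. g i) = (\<Prod>i\<in>E. g (i + 2))"
    using prod.reindex[OF inj, of g] by (simp add: comp_def)
  finally show ?thesis .
qed

lemma W2:
  fixes f :: "'v set \<Rightarrow> 'a::semifield_mult"
  assumes ne: "ys \<noteq> []"
  shows "f {b, ys ! 0} * Tweight f (a # b # ys) = f {a, b} * Tweight f ys"
proof -
  define E where "E = {i. i < length ys - 1 \<and> even i}"
  define Od where "Od = {i. i < length ys - 1 \<and> odd i}"
  have fin: "finite E" "finite Od" unfolding E_def Od_def by simp_all
  have inj: "inj_on (\<lambda>i. i + 2) A" for A :: "nat set" by (simp add: inj_on_def)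
  have Ex: "{i. i < length (a # b # ys) - 1 \<and> even i} = insert 0 ((\<lambda>i. i + 2) ` E)"
  proof (rule set_eqI)
    fix i show "i \<in> {i. i < length (a # b # ys) - 1 \<and> even i} \<longleftrightarrow> i \<in> insert 0 ((\<lambda>i. i + 2) ` E)"
    proof
      assume i: "i \<in> {i. i < length (a # b # ys) - 1 \<and> even i}"
      show "i \<in> insert 0 ((\<lambda>i. i + 2) ` E)"
      proof (cases "i = 0")
        case False
        then have "i = (i - 2) + 2" "i - 2 \<in> E" using i ne unfolding E_def by (auto elim!: evenE)
        then show ?thesis by (metis image_eqI insertI2)
      qed simp
    next
      assume "i \<in> insert 0 ((\<lambda>i. i + 2) ` E)"
      then show "i \<in> {i. i < length (a # b # ys) - 1 \<and> even i}" using ne unfolding E_def by auto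
    qed
  qed
  have Ox: "{i. i < length (a # b # ys) - 1 \<and> odd i} = insert 1 ((\<lambda>i. i + 2) ` Od)"
  proof (rule set_eqI)
    fix i show "i \<in> {i. i < length (a # b # ys) - 1 \<and> odd i} \<longleftrightarrow> i \<in> insert 1 ((\<lambda>i. i + 2) ` Od)"
    proof
      assume i: "i \<in> {i. i < length (a # b # ys) - 1 \<and> odd i}"
      show "i \<in> insert 1 ((\<lambda>i. i + 2) ` Od)"
      proof (cases "i = 1")
        case False
        then have "i = (i - 2) + 2" "i - 2 \<in> Od" using i ne unfolding Od_def by (auto elim!: oddE)
        then show ?thesis by (metis image_eqI insertI2)
      qed simp
    next
      assume "i \<in> insert 1 ((\<lambda>i. i + 2) ` Od)"
      then show "i \<in> {i. i < length (a # b # ys) - 1 \<and> odd i}" using ne unfolding Od_def by auto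
    qed
  qed
  have s: "step (a # b # ys) (i + 2) = step ys i" for i by (simp add: step_def)
  have n0: "0 \<notin> (\<lambda>i::nat. i + 2) ` E" and n1: "1 \<notin> (\<lambda>i::nat. i + 2) ` Od" by auto
  have "(\<Prod>i\<in>{i. i < length (a # b # ys) - 1 \<and> even i}. f (step (a # b # ys) i))
      = f {a, b} * (\<Prod>i\<in>E. f (step ys i))"
    unfolding Ex prod_shift[OF fin(1) n0] s by (simp add: step_def)
  moreover have "(\<Prod>i\<in>{i. i < length (a # b # ys) - 1 \<and> odd i}. f (step (a # b # ys) i))
      = f {b, ys ! 0} * (\<Prod>i\<in>Od. f (step ys i))"
    unfolding Ox prod_shift[OF fin(2) n1] s by (simp add: step_def)
  ultimately have "Tweight f (a # b # ys) = f {a, b} * (\<Prod>i\<in>E. f (step ys i)) / (f {b, ys ! 0} * (\<Prod>i\<in>Od. f (step ys i)))"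
    unfolding Tweight_def by simp
  moreover have "Tweight f ys = (\<Prod>i\<in>E. f (step ys i)) / (\<Prod>i\<in>Od. f (step ys i))"
    unfolding Tweight_def E_def Od_def ..
  ultimately show ?thesis
    by (simp add: sf_divide sf_inv_mult ac_simps) (simp add: mult.assoc[symmetric] sf_right_inverse)
qed


lemma list3: "length xs \<ge> 3 \<Longrightarrow> xs = xs ! 0 # xs ! 1 # xs ! 2 # drop 3 xs"
proof -
  assume l: "length xs \<ge> 3"
  obtain a l1 where 1: "xs = a # l1" using l by (cases xs) auto
  obtain b l2 where 2: "l1 = b # l2" using l 1 by (cases l1) auto
  obtain c l3 where 3: "l2 = c # l3" using l 1 2 by (cases l2) auto
  show ?thesis using 1 2 3 by (simp add: numeral_3_eq_3)
qed

theorem lemma3p8: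
  fixes V :: "'v set" and pos :: "'v \<Rightarrow> nat" and D D2 :: "'v set set"
    and d :: "'v set" and \<zeta> \<eta> \<alpha> \<beta> :: 'v and f :: "'v set \<Rightarrow> 'a::semifield_mult"
  assumes P: "polygon V pos"
    and D: "dissection V pos V D" and Dne: "D \<noteq> {}"
    and d: "d = {\<zeta>, \<eta>}" "d \<in> D"
    and V2: "V2 = {\<epsilon> \<in> V. cbtw V pos \<eta> \<epsilon> \<zeta>}"
    and D2: "dissection V pos V2 D2" and DD: "D = {d} \<union> D2"
    and U1: "U1 = {\<epsilon> \<in> V. btw V pos \<zeta> \<epsilon> \<eta>}"
    and U2: "U2 = {\<epsilon> \<in> V. btw V pos \<eta> \<epsilon> \<zeta>}"
    and \<alpha>: "\<alpha> \<in> U1" and \<beta>: "\<beta> \<in> U2"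
  shows
    "bij_betw (\<lambda>\<pi>. \<eta> # tl \<pi>)
        {\<pi> \<in> Tpaths V pos D \<alpha> \<beta>. length \<pi> \<ge> 3 \<and> \<pi> ! 1 = \<zeta> \<and> \<pi> ! 2 \<noteq> \<eta>}
        {\<rho> \<in> Tpaths V pos D \<eta> \<beta>. \<rho> ! 1 = \<zeta>}
     \<and> (\<forall>\<pi> \<in> {\<pi> \<in> Tpaths V pos D \<alpha> \<beta>. length \<pi> \<ge> 3 \<and> \<pi> ! 1 = \<zeta> \<and> \<pi> ! 2 \<noteq> \<eta>}.
          f {\<alpha>, \<zeta>} / f {\<eta>, \<zeta>} * Tweight f (\<eta> # tl \<pi>) = Tweight f \<pi>)
     \<and> bij_betw (\<lambda>\<pi>. \<eta> # drop 3 \<pi>)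
        {\<pi> \<in> Tpaths V pos D \<alpha> \<beta>. length \<pi> \<ge> 3 \<and> \<pi> ! 1 = \<zeta> \<and> \<pi> ! 2 = \<eta>}
        {\<sigma> \<in> Tpaths V pos D \<eta> \<beta>. \<sigma> ! 1 \<noteq> \<zeta>}
     \<and> (\<forall>\<pi> \<in> {\<pi> \<in> Tpaths V pos D \<alpha> \<beta>. length \<pi> \<ge> 3 \<and> \<pi> ! 1 = \<zeta> \<and> \<pi> ! 2 = \<eta>}.
          f {\<alpha>, \<zeta>} / f {\<zeta>, \<eta>} * Tweight f (\<eta> # drop 3 \<pi>) = Tweight f \<pi>)"
proof -
  have Dsub: "D2 \<subseteq> diag V2" using D2 unfolding dissection_def by auto
  have aV: "\<alpha> \<in> V" "btw V pos \<zeta> \<alpha> \<eta>" using \<alpha> U1 by auto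
  have bV: "\<beta> \<in> V" "btw V pos \<eta> \<beta> \<zeta>" using \<beta> U2 by auto
  have dD: "{\<zeta>, \<eta>} \<in> D" using d by simp
  have DD': "D = insert {\<zeta>, \<eta>} D2" using DD d by simp
  interpret L: L V pos D D2 \<zeta> \<eta> \<alpha> \<beta> V2 "\<lambda>y. (pos y + card V - pos \<zeta>) mod card V"
    by (unfold_locales) (use P D dD DD' V2 Dsub aV bV in auto)
  have b1: "bij_betw (\<lambda>\<pi>. \<eta> # tl \<pi>)
        {\<pi> \<in> Tpaths V pos D \<alpha> \<beta>. length \<pi> \<ge> 3 \<and> \<pi> ! 1 = \<zeta> \<and> \<pi> ! 2 \<noteq> \<eta>}
        {\<rho> \<in> Tpaths V pos D \<eta> \<beta>. \<rho> ! 1 = \<zeta>}"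
  proof (rule bij_betw_byWitness[where f'="\<lambda>\<rho>. \<alpha> # tl \<rho>"])
    show "\<forall>\<pi>\<in>{\<pi> \<in> Tpaths V pos D \<alpha> \<beta>. length \<pi> \<ge> 3 \<and> \<pi> ! 1 = \<zeta> \<and> \<pi> ! 2 \<noteq> \<eta>}.
        \<alpha> # tl (\<eta> # tl \<pi>) = \<pi>"
    proof
      fix \<pi> assume "\<pi> \<in> {\<pi> \<in> Tpaths V pos D \<alpha> \<beta>. length \<pi> \<ge> 3 \<and> \<pi> ! 1 = \<zeta> \<and> \<pi> ! 2 \<noteq> \<eta>}"
      then have "hd \<pi> = \<alpha>" "\<pi> \<noteq> []" unfolding Tpaths_def by auto
      then show "\<alpha> # tl (\<eta> # tl \<pi>) = \<pi>" by (cases \<pi>) auto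
    qed
    show "\<forall>\<rho>\<in>{\<rho> \<in> Tpaths V pos D \<eta> \<beta>. \<rho> ! 1 = \<zeta>}. \<eta> # tl (\<alpha> # tl \<rho>) = \<rho>"
    proof
      fix \<rho> assume "\<rho> \<in> {\<rho> \<in> Tpaths V pos D \<eta> \<beta>. \<rho> ! 1 = \<zeta>}"
      then have "hd \<rho> = \<eta>" "\<rho> \<noteq> []" using L.TpathD(1) unfolding Tpaths_def by fastforce+
      then show "\<eta> # tl (\<alpha> # tl \<rho>) = \<rho>" by (cases \<rho>) auto
    qed
    show "(\<lambda>\<pi>. \<eta> # tl \<pi>) ` {\<pi> \<in> Tpaths V pos D \<alpha> \<beta>. length \<pi> \<ge> 3 \<and> \<pi> ! 1 = \<zeta> \<and> \<pi> ! 2 \<noteq> \<eta>}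
        \<subseteq> {\<rho> \<in> Tpaths V pos D \<eta> \<beta>. \<rho> ! 1 = \<zeta>}"
    proof (rule image_subsetI)
      fix \<pi> assume "\<pi> \<in> {\<pi> \<in> Tpaths V pos D \<alpha> \<beta>. length \<pi> \<ge> 3 \<and> \<pi> ! 1 = \<zeta> \<and> \<pi> ! 2 \<noteq> \<eta>}"
      then have p: "Tpath V pos D \<pi>" "hd \<pi> = \<alpha>" "last \<pi> = \<beta>" "length \<pi> \<ge> 3" "\<pi> ! 1 = \<zeta>" "\<pi> ! 2 \<noteq> \<eta>"
        unfolding Tpaths_def by auto
      have T: "Tpath V pos D (\<eta> # tl \<pi>)" using L.fwd1[OF p] .
      have ne: "\<pi> \<noteq> []" using p(4) by auto
      have "last (\<eta> # tl \<pi>) = \<beta>" using p(3,4) ne by (cases \<pi>) auto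
      moreover have "(\<eta> # tl \<pi>) ! 1 = \<zeta>" using nth_Cons_tl[OF ne, of 1 \<eta>] p(5) by simp
      ultimately show "\<eta> # tl \<pi> \<in> {\<rho> \<in> Tpaths V pos D \<eta> \<beta>. \<rho> ! 1 = \<zeta>}"
        using T unfolding Tpaths_def by simp
    qed
    show "(\<lambda>\<rho>. \<alpha> # tl \<rho>) ` {\<rho> \<in> Tpaths V pos D \<eta> \<beta>. \<rho> ! 1 = \<zeta>}
        \<subseteq> {\<pi> \<in> Tpaths V pos D \<alpha> \<beta>. length \<pi> \<ge> 3 \<and> \<pi> ! 1 = \<zeta> \<and> \<pi> ! 2 \<noteq> \<eta>}"
    proof (rule image_subsetI)
      fix \<rho> assume "\<rho> \<in> {\<rho> \<in> Tpaths V pos D \<eta> \<beta>. \<rho> ! 1 = \<zeta>}"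
      then have r: "Tpath V pos D \<rho>" "hd \<rho> = \<eta>" "last \<rho> = \<beta>" "\<rho> ! 1 = \<zeta>"
        unfolding Tpaths_def by auto
      note B = L.bwd1[OF r]
      have ne: "\<rho> \<noteq> []" using B(2) by auto
      have "last (\<alpha> # tl \<rho>) = \<beta>" using r(3) B(2) ne by (cases \<rho>) auto
      moreover have "(\<alpha> # tl \<rho>) ! 1 = \<zeta>" using nth_Cons_tl[OF ne, of 1 \<alpha>] r(4) by simp
      moreover have "(\<alpha> # tl \<rho>) ! 2 \<noteq> \<eta>" using nth_Cons_tl[OF ne, of 2 \<alpha>] B(3) by simp
      moreover have "length (\<alpha> # tl \<rho>) \<ge> 3" using B(2) ne by (cases \<rho>) auto
      ultimately show "\<alpha> # tl \<rho> \<in> {\<pi> \<in> Tpaths V pos D \<alpha> \<beta>. length \<pi> \<ge> 3 \<and> \<pi> ! 1 = \<zeta> \<and> \<pi> ! 2 \<noteq> \<eta>}"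
        using B(1) unfolding Tpaths_def by simp
    qed
  qed
  have w1: "\<forall>\<pi> \<in> {\<pi> \<in> Tpaths V pos D \<alpha> \<beta>. length \<pi> \<ge> 3 \<and> \<pi> ! 1 = \<zeta> \<and> \<pi> ! 2 \<noteq> \<eta>}.
          f {\<alpha>, \<zeta>} / f {\<eta>, \<zeta>} * Tweight f (\<eta> # tl \<pi>) = Tweight f \<pi>"
  proof
    fix \<pi> assume "\<pi> \<in> {\<pi> \<in> Tpaths V pos D \<alpha> \<beta>. length \<pi> \<ge> 3 \<and> \<pi> ! 1 = \<zeta> \<and> \<pi> ! 2 \<noteq> \<eta>}"
    then have p: "hd \<pi> = \<alpha>" "length \<pi> \<ge> 3" "\<pi> ! 1 = \<zeta>" unfolding Tpaths_def by auto
    have ne: "\<pi> \<noteq> []" using p by auto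
    have "f (step (\<eta> # tl \<pi>) 0) * Tweight f \<pi> = f (step \<pi> 0) * Tweight f (\<eta> # tl \<pi>)"
      by (rule W1) (use p ne step_Cons_tl[OF ne] in auto)
    moreover have "step (\<eta> # tl \<pi>) 0 = {\<eta>, \<zeta>}" using nth_Cons_tl[OF ne, of 1 \<eta>] p unfolding step_def by simp
    moreover have "step \<pi> 0 = {\<alpha>, \<zeta>}" using p ne unfolding step_def by (simp add: hd_conv_nth)
    ultimately show "f {\<alpha>, \<zeta>} / f {\<eta>, \<zeta>} * Tweight f (\<eta> # tl \<pi>) = Tweight f \<pi>"
      using sf_solve by metis
  qed
  have b2: "bij_betw (\<lambda>\<pi>. \<eta> # drop 3 \<pi>)
        {\<pi> \<in> Tpaths V pos D \<alpha> \<beta>. length \<pi> \<ge> 3 \<and> \<pi> ! 1 = \<zeta> \<and> \<pi> ! 2 = \<eta>}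
        {\<sigma> \<in> Tpaths V pos D \<eta> \<beta>. \<sigma> ! 1 \<noteq> \<zeta>}"
  proof (rule bij_betw_byWitness[where f'="\<lambda>\<sigma>. \<alpha> # \<zeta> # \<sigma>"])
    show "\<forall>\<pi>\<in>{\<pi> \<in> Tpaths V pos D \<alpha> \<beta>. length \<pi> \<ge> 3 \<and> \<pi> ! 1 = \<zeta> \<and> \<pi> ! 2 = \<eta>}.
        \<alpha> # \<zeta> # \<eta> # drop 3 \<pi> = \<pi>"
    proof
      fix \<pi> assume "\<pi> \<in> {\<pi> \<in> Tpaths V pos D \<alpha> \<beta>. length \<pi> \<ge> 3 \<and> \<pi> ! 1 = \<zeta> \<and> \<pi> ! 2 = \<eta>}"
      then have p: "hd \<pi> = \<alpha>" "length \<pi> \<ge> 3" "\<pi> ! 1 = \<zeta>" "\<pi> ! 2 = \<eta>" unfolding Tpaths_def by auto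
      have "\<pi> ! 0 = \<alpha>" using p by (cases \<pi>) auto
      then show "\<alpha> # \<zeta> # \<eta> # drop 3 \<pi> = \<pi>" using list3[OF p(2)] p by metis
    qed
    show "\<forall>\<sigma>\<in>{\<sigma> \<in> Tpaths V pos D \<eta> \<beta>. \<sigma> ! 1 \<noteq> \<zeta>}. \<eta> # drop 3 (\<alpha> # \<zeta> # \<sigma>) = \<sigma>"
    proof
      fix \<sigma> assume "\<sigma> \<in> {\<sigma> \<in> Tpaths V pos D \<eta> \<beta>. \<sigma> ! 1 \<noteq> \<zeta>}"
      then have "hd \<sigma> = \<eta>" "\<sigma> \<noteq> []" using L.TpathD(1) unfolding Tpaths_def by fastforce+
      then show "\<eta> # drop 3 (\<alpha> # \<zeta> # \<sigma>) = \<sigma>" by (cases \<sigma>) (auto simp: numeral_3_eq_3)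
    qed
    show "(\<lambda>\<pi>. \<eta> # drop 3 \<pi>) ` {\<pi> \<in> Tpaths V pos D \<alpha> \<beta>. length \<pi> \<ge> 3 \<and> \<pi> ! 1 = \<zeta> \<and> \<pi> ! 2 = \<eta>}
        \<subseteq> {\<sigma> \<in> Tpaths V pos D \<eta> \<beta>. \<sigma> ! 1 \<noteq> \<zeta>}"
    proof (rule image_subsetI)
      fix \<pi> assume "\<pi> \<in> {\<pi> \<in> Tpaths V pos D \<alpha> \<beta>. length \<pi> \<ge> 3 \<and> \<pi> ! 1 = \<zeta> \<and> \<pi> ! 2 = \<eta>}"
      then have p: "Tpath V pos D \<pi>" "hd \<pi> = \<alpha>" "last \<pi> = \<beta>" "length \<pi> \<ge> 3" "\<pi> ! 1 = \<zeta>" "\<pi> ! 2 = \<eta>"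
        unfolding Tpaths_def by auto
      note F = L.fwd2[OF p]
      have eq: "\<eta> # drop 3 \<pi> = drop 2 \<pi>" using Cons_nth_drop_Suc[of 2 \<pi>] p(4,6) by (simp add: numeral_3_eq_3 numeral_2_eq_2)
      have "hd (drop 2 \<pi>) = \<eta>" using eq by (metis list.sel(1))
      moreover have "last (drop 2 \<pi>) = \<beta>" using p(3,4) by (simp add: last_drop)
      ultimately show "\<eta> # drop 3 \<pi> \<in> {\<sigma> \<in> Tpaths V pos D \<eta> \<beta>. \<sigma> ! 1 \<noteq> \<zeta>}"
        unfolding eq Tpaths_def using F by simp
    qed
    show "(\<lambda>\<sigma>. \<alpha> # \<zeta> # \<sigma>) ` {\<sigma> \<in> Tpaths V pos D \<eta> \<beta>. \<sigma> ! 1 \<noteq> \<zeta>}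
        \<subseteq> {\<pi> \<in> Tpaths V pos D \<alpha> \<beta>. length \<pi> \<ge> 3 \<and> \<pi> ! 1 = \<zeta> \<and> \<pi> ! 2 = \<eta>}"
    proof (rule image_subsetI)
      fix \<sigma> assume "\<sigma> \<in> {\<sigma> \<in> Tpaths V pos D \<eta> \<beta>. \<sigma> ! 1 \<noteq> \<zeta>}"
      then have r: "Tpath V pos D \<sigma>" "hd \<sigma> = \<eta>" "last \<sigma> = \<beta>" "\<sigma> ! 1 \<noteq> \<zeta>"
        unfolding Tpaths_def by auto
      note B = L.bwd2[OF r]
      have ne: "\<sigma> \<noteq> []" using L.TpathD(1)[OF r(1)] by auto
      have "\<sigma> ! 0 = \<eta>" using r(2) ne by (simp add: hd_conv_nth)
      then show "\<alpha> # \<zeta> # \<sigma> \<in> {\<pi> \<in> Tpaths V pos D \<alpha> \<beta>. length \<pi> \<ge> 3 \<and> \<pi> ! 1 = \<zeta> \<and> \<pi> ! 2 = \<eta>}"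
        using B r(3) ne unfolding Tpaths_def by (auto simp: numeral_2_eq_2 Suc_le_eq)
    qed
  qed
  have w2: "\<forall>\<pi> \<in> {\<pi> \<in> Tpaths V pos D \<alpha> \<beta>. length \<pi> \<ge> 3 \<and> \<pi> ! 1 = \<zeta> \<and> \<pi> ! 2 = \<eta>}.
          f {\<alpha>, \<zeta>} / f {\<zeta>, \<eta>} * Tweight f (\<eta> # drop 3 \<pi>) = Tweight f \<pi>"
  proof
    fix \<pi> assume "\<pi> \<in> {\<pi> \<in> Tpaths V pos D \<alpha> \<beta>. length \<pi> \<ge> 3 \<and> \<pi> ! 1 = \<zeta> \<and> \<pi> ! 2 = \<eta>}"
    then have p: "hd \<pi> = \<alpha>" "length \<pi> \<ge> 3" "\<pi> ! 1 = \<zeta>" "\<pi> ! 2 = \<eta>" unfolding Tpaths_def by auto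
    have "\<pi> ! 0 = \<alpha>" using p by (cases \<pi>) auto
    then have e: "\<pi> = \<alpha> # \<zeta> # (\<eta> # drop 3 \<pi>)" using list3[OF p(2)] p by metis
    have "f {\<zeta>, (\<eta> # drop 3 \<pi>) ! 0} * Tweight f (\<alpha> # \<zeta> # (\<eta> # drop 3 \<pi>)) = f {\<alpha>, \<zeta>} * Tweight f (\<eta> # drop 3 \<pi>)"
      by (rule W2) simp
    then have "f {\<zeta>, \<eta>} * Tweight f \<pi> = f {\<alpha>, \<zeta>} * Tweight f (\<eta> # drop 3 \<pi>)" using e by simp
    then show "f {\<alpha>, \<zeta>} / f {\<zeta>, \<eta>} * Tweight f (\<eta> # drop 3 \<pi>) = Tweight f \<pi>"
      by (rule sf_solve)
  qed
  show ?thesis using b1 w1 b2 w2 by blast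
qed

end
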